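(* Let $q$ be a prime power, $a\in\mathbb{F}_q^*$, $n\ge 0$ an integer, and let $y\in\mathbb{F}_{q^2}$ with $y\neq 0$, $y^2\neq a$ and $2y\neq a$. Put $x=y(a-y)$. Then $$F_n(a,x)=\frac{a}{2y-a}\bigl(y^n-(a-y)^n\bigr).$$
   Context: For an integer $n\ge 1$, the $n$-th reversed Dickson polynomial of the third kind is $F_n(a,x)=\sum_{i=0}^{\lfloor n/2\rfloor}\frac{n-2i}{n-i}\binom{n-i}{i}(-x)^i a^{n-2i}$, where each coefficient $\frac{n-2i}{n-i}\binom{n-i}{i}$ is an integer (read in the field), and $F_0(a,x)=0$. *)

theory Defs
  imports "HOL-Computational_Algebra.Primes"
begin

text \<open>Integer coefficient (n-2i)/(n-i) * binom(n-i,i), computed exactly in nat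
  (the division is exact for 0 <= i <= n div 2, n >= 1).\<close>
definition rd3_coeff :: "nat \<Rightarrow> nat \<Rightarrow> nat" where
  "rd3_coeff n i = ((n - 2*i) * ((n - i) choose i)) div (n - i)"

definition rev_dickson3 :: "nat \<Rightarrow> 'a::field \<Rightarrow> 'a \<Rightarrow> 'a" where
  "rev_dickson3 n a x =
     (if n = 0 then 0
      else (\<Sum>i = 0..n div 2. of_nat (rd3_coeff n i) * (- x) ^ i * a ^ (n - 2*i)))"

end

theory Submission
  imports Defs
begin

lemma coeff_eq: "1 \<le> n \<Longrightarrow> 2*i \<le> n \<Longrightarrow> rd3_coeff n i = (n - 1 - i) choose i"
proof -
  assume "1 \<le> n" "2*i \<le> n"
  define m where "m = n - i"
  have m: "m \<ge> 1" "n - 2*i = m - i" "n - 1 - i = m - 1" using \<open>1 \<le> n\<close> \<open>2*i \<le> n\<close> unfolding m_def by auto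
  have "(m - i) * (m choose i) = m * ((m - 1) choose i)" by (rule binomial_absorb_comp)
  thus ?thesis unfolding rd3_coeff_def using m by (simp add: m_def[symmetric])
qed

definition T :: "'a::field \<Rightarrow> 'a \<Rightarrow> nat \<Rightarrow> nat \<Rightarrow> 'a" where
  "T a x m i = of_nat ((m - i) choose i) * (-x) ^ i * a ^ (m - 2*i)"

definition S :: "'a::field \<Rightarrow> 'a \<Rightarrow> nat \<Rightarrow> 'a" where
  "S a x m = (\<Sum>i\<le>m. T a x m i)"

lemma T_zero: "m < 2*i \<Longrightarrow> T a x m i = 0"
proof -
  assume "m < 2*i"
  then have "m - i < i" by simp
  then show ?thesis unfolding T_def by (simp add: binomial_eq_0)
qed

lemma S_rec: "S a x (Suc (Suc m)) = a * S a x (Suc m) - x * S a x m"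
proof -
  have pas: "((Suc m - i) choose (Suc i)) = ((m - i) choose (Suc i)) + ((m - i) choose i)" if "i \<le> Suc m" for i
  proof (cases "i \<le> m")
    case True
    then have "Suc m - i = Suc (m - i)" by simp
    then show ?thesis by simp
  next
    case False
    then have "i = Suc m" using that by simp
    then show ?thesis by simp
  qed
  have "S a x (Suc (Suc m)) = T a x (Suc (Suc m)) 0 + (\<Sum>i\<le>Suc m. T a x (Suc (Suc m)) (Suc i))"
    unfolding S_def by (rule sum.atMost_Suc_shift)
  also have "(\<Sum>i\<le>Suc m. T a x (Suc (Suc m)) (Suc i)) =
     (\<Sum>i\<le>Suc m. of_nat ((m - i) choose (Suc i)) * (-x) ^ Suc i * a ^ (m - 2*i))
   + (\<Sum>i\<le>Suc m. of_nat ((m - i) choose i) * (-x) ^ Suc i * a ^ (m - 2*i))"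
    unfolding sum.distrib[symmetric]
    by (rule sum.cong) (auto simp: T_def pas algebra_simps)
  also have "(\<Sum>i\<le>Suc m. of_nat ((m - i) choose i) * (-x) ^ Suc i * a ^ (m - 2*i))
      = - x * (\<Sum>i\<le>Suc m. T a x m i)"
    by (simp add: sum_distrib_left T_def mult_ac)
  also have "(\<Sum>i\<le>Suc m. T a x m i) = S a x m"
    by (simp add: S_def T_zero)
  also have "(\<Sum>i\<le>Suc m. of_nat ((m - i) choose (Suc i)) * (-x) ^ Suc i * a ^ (m - 2*i))
      = a * (\<Sum>i\<le>m. T a x (Suc m) (Suc i))"
  proof -
    have "(\<Sum>i\<le>Suc m. of_nat ((m - i) choose (Suc i)) * (-x) ^ Suc i * a ^ (m - 2*i))
        = (\<Sum>i\<le>m. of_nat ((m - i) choose (Suc i)) * (-x) ^ Suc i * a ^ (m - 2*i))"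
      by simp
    also have "\<dots> = (\<Sum>i\<le>m. a * T a x (Suc m) (Suc i))"
    proof (rule sum.cong)
      fix i assume "i \<in> {..m}"
      show "of_nat ((m - i) choose (Suc i)) * (-x) ^ Suc i * a ^ (m - 2*i) = a * T a x (Suc m) (Suc i)"
      proof (cases "Suc (2*i) \<le> m")
        case True
        then have "m - 2*i = Suc (m - Suc (2*i))" by simp
        then show ?thesis unfolding T_def by (simp add: mult_ac)
      next
        case False
        then have "m - i < Suc i" by simp
        then show ?thesis unfolding T_def by (simp add: binomial_eq_0)
      qed
    qed simp
    finally show ?thesis by (simp add: sum_distrib_left)
  qed
  also have "a * (\<Sum>i\<le>m. T a x (Suc m) (Suc i)) = a * S a x (Suc m) - a * T a x (Suc m) 0"
  proof -
    have "S a x (Suc m) = T a x (Suc m) 0 + (\<Sum>i\<le>m. T a x (Suc m) (Suc i))"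
      unfolding S_def by (rule sum.atMost_Suc_shift)
    then show ?thesis by (simp add: algebra_simps)
  qed
  finally show ?thesis by (simp add: T_def algebra_simps)
qed

lemma S_closed:
  fixes y z :: "'a::field"
  shows "(y - z) * S (y + z) (y * z) m = y ^ Suc m - z ^ Suc m"
proof (induction m rule: nat_less_induct)
  case (1 m)
  show ?case
  proof (cases m)
    case 0
    then show ?thesis by (simp add: S_def T_def)
  next
    case (Suc k)
    show ?thesis
    proof (cases k)
      case 0
      then show ?thesis using Suc by (simp add: S_def T_def algebra_simps power2_eq_square)
    next
      case (Suc j)
      have h1: "(y - z) * S (y + z) (y * z) (Suc j) = y ^ Suc (Suc j) - z ^ Suc (Suc j)"
        using 1 \<open>m = Suc k\<close> Suc by simp
      have h2: "(y - z) * S (y + z) (y * z) j = y ^ Suc j - z ^ Suc j"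
        using 1 \<open>m = Suc k\<close> Suc by simp
      have "(y - z) * S (y + z) (y * z) m =
          (y + z) * ((y - z) * S (y + z) (y * z) (Suc j)) - y * z * ((y - z) * S (y + z) (y * z) j)"
        using \<open>m = Suc k\<close> Suc by (simp add: S_rec algebra_simps)
      also have "\<dots> = y ^ Suc m - z ^ Suc m"
        unfolding h1 h2 using \<open>m = Suc k\<close> Suc by (simp add: algebra_simps)
      finally show ?thesis .
    qed
  qed
qed

theorem lemma2p2:
  fixes a y :: "'a::{field,finite}" and q p k n :: nat
  assumes "prime p" and "k \<ge> 1" and "q = p ^ k"
    and "card (UNIV :: 'a set) = q ^ 2"
    and "a ^ q = a" and "a \<noteq> 0"
    and "y \<noteq> 0" and "y ^ 2 \<noteq> a" and "2 * y \<noteq> a"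
  shows "rev_dickson3 n a (y * (a - y)) = a / (2 * y - a) * (y ^ n - (a - y) ^ n)"
proof (cases n)
  case 0
  then show ?thesis by (simp add: rev_dickson3_def)
next
  case (Suc m)
  define x where "x = y * (a - y)"
  have "rev_dickson3 n a x = (\<Sum>i = 0..n div 2. a * T a x m i)"
    unfolding rev_dickson3_def using Suc
  proof (simp, intro sum.cong refl)
    fix i assume i: "i \<in> {0..Suc m div 2}"
    show "of_nat (rd3_coeff (Suc m) i) * (- x) ^ i * a ^ (Suc m - 2 * i) = a * T a x m i"
    proof (cases "2*i \<le> m")
      case True
      then have "Suc m - 2*i = Suc (m - 2*i)" by simp
      then show ?thesis using True coeff_eq[of "Suc m" i] by (simp add: T_def mult_ac)
    next
      case False
      then have "2*i = Suc m" using i by auto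
      then have "m - i < i" by simp
      then show ?thesis using coeff_eq[of "Suc m" i] \<open>2*i = Suc m\<close> by (simp add: T_def binomial_eq_0)
    qed
  qed
  also have "\<dots> = a * S a x m"
    unfolding S_def sum_distrib_left
    by (rule sum.mono_neutral_left) (use Suc in \<open>auto simp: T_zero\<close>)
  finally have e: "rev_dickson3 n a x = a * S a x m" .
  have "(y - (a - y)) * S (y + (a - y)) (y * (a - y)) m = y ^ n - (a - y) ^ n"
    using S_closed[of y "a - y" m] Suc by simp
  then have "(2 * y - a) * S a x m = y ^ n - (a - y) ^ n" by (simp add: x_def algebra_simps)
  moreover have "2 * y - a \<noteq> 0" using assms(9) by simp
  ultimately have "S a x m = (y ^ n - (a - y) ^ n) / (2 * y - a)"
    by (simp add: field_simps)
  then show ?thesis using e x_def by simp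
qed

end
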